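(* Let $(U,\|\cdot\|)$ be a uniformly convex Banach space and let $Q\subseteq U$ be a nonempty, bounded, closed, convex set. Let $r>0$ and let $\{\beta_n\}_{n\in\mathbb{N}}$ be a sequence of positive real numbers with $\lim_{n\to\infty}\beta_n=1$. Suppose $T:Q\to Q$ satisfies: for all $p,q\in Q$ with $\|p-q\|<r$, $$\|T^np-T^nq\|\leq \beta_n\|p-q\|\quad\text{for every } n\in\mathbb{N}.$$ If there exists $q_0\in Q$ such that the asymptotic radius of the sequence $\{T^nq_0\}_n$ relative to $Q$ is less than $r$, then $T$ has a fixed point. Furthermore, the set of fixed points of $T$ is closed.
   Context: A map $T$ as in the statement is called uniformly local asymptotic nonexpansive. For a bounded sequence $\{x_n\}_n$ in $U$, its asymptotic radius relative to $Q$ is $\rho=\inf_{y\in Q}\limsup_{n\to\infty}\|x_n-y\|$. *)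

theory Defs
  imports "HOL-Analysis.Analysis"
begin

definition uniformly_convex_space :: "'a::real_normed_vector itself \<Rightarrow> bool" where
  "uniformly_convex_space _ \<longleftrightarrow>
     (\<forall>\<epsilon>>0. \<exists>\<delta>>0. \<forall>x y::'a. norm x \<le> 1 \<longrightarrow> norm y \<le> 1 \<longrightarrow> norm (x - y) \<ge> \<epsilon>
          \<longrightarrow> norm ((1/2) *\<^sub>R (x + y)) \<le> 1 - \<delta>)"

definition asymptotic_radius :: "(nat \<Rightarrow> 'a::real_normed_vector) \<Rightarrow> 'a set \<Rightarrow> ereal" where
  "asymptotic_radius x Q = (INF y\<in>Q. limsup (\<lambda>n. ereal (norm (x n - y))))"

end

theory Submission
  imports Defs
begin

lemma L1:
  fixes x :: "nat \<Rightarrow> 'a::real_normed_vector"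
  assumes "limsup (\<lambda>n. ereal (norm (x n - y))) < ereal a"
  shows "eventually (\<lambda>n. norm (x n - y) < a) sequentially"
  using Limsup_lessD[OF assms] by simp

lemma L2:
  fixes x :: "nat \<Rightarrow> 'a::real_normed_vector"
  assumes "\<And>a. a > c \<Longrightarrow> eventually (\<lambda>n. norm (x n - y) < a) sequentially"
  shows "limsup (\<lambda>n. ereal (norm (x n - y))) \<le> ereal c"
  unfolding Limsup_le_iff
proof (intro allI impI)
  fix z :: ereal assume z: "z > ereal c"
  show "eventually (\<lambda>n. z > ereal (norm (x n - y))) sequentially"
  proof (cases z)
    case (real a)
    with z have "a > c" by simp
    from assms[OF this] show ?thesis by eventually_elim (simp add: real)
  next
    case PInf then show ?thesis by simp
  next
    case MInf with z show ?thesis by simp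
  qed
qed

lemma Ltri:
  fixes x :: "nat \<Rightarrow> 'a::real_normed_vector"
  assumes "limsup (\<lambda>n. ereal (norm (x n - u))) \<le> ereal a"
    and "limsup (\<lambda>n. ereal (norm (x n - v))) \<le> ereal b"
  shows "norm (u - v) \<le> a + b"
proof (rule field_le_epsilon)
  fix e :: real assume e: "e > 0"
  have "eventually (\<lambda>n. norm (x n - u) < a + e/2) sequentially"
    by (rule L1) (use assms(1) e in \<open>auto intro: le_less_trans\<close>)
  moreover have "eventually (\<lambda>n. norm (x n - v) < b + e/2) sequentially"
    by (rule L1) (use assms(2) e in \<open>auto intro: le_less_trans\<close>)
  ultimately have "eventually (\<lambda>n. norm (x n - u) < a + e/2 \<and> norm (x n - v) < b + e/2) sequentially"
    by eventually_elim auto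
  then obtain N where "\<forall>n\<ge>N. norm (x n - u) < a + e/2 \<and> norm (x n - v) < b + e/2"
    unfolding eventually_sequentially by blast
  then obtain n where n: "norm (x n - u) < a + e/2" "norm (x n - v) < b + e/2"
    by blast
  have eq: "u - v = (u - x n) + (x n - v)" by simp
  have "norm (u - v) \<le> norm (u - x n) + norm (x n - v)"
    unfolding eq by (rule norm_triangle_ineq)
  also have "norm (u - x n) = norm (x n - u)" by (rule norm_minus_commute)
  finally have "norm (u - v) \<le> norm (x n - u) + norm (x n - v)" .
  with n show "norm (u - v) \<le> a + b + e" by linarith
qed

lemma Llip:
  fixes x :: "nat \<Rightarrow> 'a::real_normed_vector"
  assumes "limsup (\<lambda>n. ereal (norm (x n - v))) \<le> ereal a"
  shows "limsup (\<lambda>n. ereal (norm (x n - u))) \<le> ereal (a + norm (u - v))"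
proof (rule L2)
  fix c assume c: "c > a + norm (u - v)"
  have "eventually (\<lambda>n. norm (x n - v) < c - norm (u - v)) sequentially"
    by (rule L1) (use assms c in \<open>auto intro: le_less_trans\<close>)
  then show "eventually (\<lambda>n. norm (x n - u) < c) sequentially"
  proof eventually_elim
    case (elim n)
    have "norm (x n - u) \<le> norm (x n - v) + norm (v - u)"
      using norm_triangle_ineq[of "x n - v" "v - u"] by simp
    with elim show ?case by (simp add: norm_minus_commute)
  qed
qed

lemma UCscaled:
  assumes ucs: "uniformly_convex_space TYPE('a::real_normed_vector)" and e: "\<epsilon> > 0"
  shows "\<exists>\<delta>>0. \<forall>(p::'a) u v a. a > 0 \<longrightarrow> norm (p - u) \<le> a \<longrightarrow> norm (p - v) \<le> a \<longrightarrow>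
           norm (u - v) \<ge> \<epsilon> * a \<longrightarrow> norm (p - (1/2) *\<^sub>R (u + v)) \<le> (1 - \<delta>) * a"
proof -
  obtain \<delta> where d: "\<delta> > 0" and H: "\<And>x y::'a. norm x \<le> 1 \<Longrightarrow> norm y \<le> 1 \<Longrightarrow> norm (x - y) \<ge> \<epsilon>
          \<Longrightarrow> norm ((1/2) *\<^sub>R (x + y)) \<le> 1 - \<delta>"
    using ucs e unfolding uniformly_convex_space_def by blast
  show ?thesis
  proof (intro exI[of _ \<delta>] conjI allI impI d)
    fix p u v :: 'a and a :: real
    assume a: "a > 0" and pu: "norm (p - u) \<le> a" and pv: "norm (p - v) \<le> a"
      and uv: "norm (u - v) \<ge> \<epsilon> * a"
    let ?x = "(1/a) *\<^sub>R (p - u)" and ?y = "(1/a) *\<^sub>R (p - v)"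
    have nx: "norm ?x \<le> 1" using a pu by (simp add: divide_simps)
    have ny: "norm ?y \<le> 1" using a pv by (simp add: divide_simps)
    have "?x - ?y = (1/a) *\<^sub>R (v - u)" by (simp add: algebra_simps)
    then have "norm (?x - ?y) = norm (u - v) / a" using a by (simp add: norm_minus_commute)
    moreover have "\<epsilon> \<le> norm (u - v) / a" using uv a by (simp add: pos_le_divide_eq)
    ultimately have "norm (?x - ?y) \<ge> \<epsilon>" by simp
    from H[OF nx ny this] have h: "norm ((1/2) *\<^sub>R (?x + ?y)) \<le> 1 - \<delta>" .
    have eq: "1/(a*2) + 1/(a*2) = 1/a" by simp
    have "(1/2) *\<^sub>R (?x + ?y) = (1/a) *\<^sub>R (p - (1/2) *\<^sub>R (u + v))"
      by (simp add: algebra_simps) (metis eq scaleR_left_distrib)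
    then have "norm (p - (1/2) *\<^sub>R (u + v)) = a * norm ((1/2) *\<^sub>R (?x + ?y))"
      using a by simp
    also have "\<dots> \<le> a * (1 - \<delta>)" using h a by (intro mult_left_mono) auto
    finally show "norm (p - (1/2) *\<^sub>R (u + v)) \<le> (1 - \<delta>) * a"
      by (simp add: mult.commute)
  qed
qed

lemma Mid:
  fixes x :: "nat \<Rightarrow> 'a::real_normed_vector"
  assumes ucs: "uniformly_convex_space TYPE('a)" and e: "\<epsilon> > 0"
  shows "\<exists>\<delta>>0. \<delta> \<le> 1/2 \<and> (\<forall>u v d. d > 0 \<longrightarrow> limsup (\<lambda>n. ereal (norm (x n - u))) \<le> ereal d \<longrightarrow>
     limsup (\<lambda>n. ereal (norm (x n - v))) \<le> ereal d \<longrightarrow> norm (u - v) \<ge> \<epsilon> * d \<longrightarrow>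
     limsup (\<lambda>n. ereal (norm (x n - (1/2) *\<^sub>R (u + v)))) \<le> ereal ((1 - \<delta>) * d))"
proof -
  obtain \<delta>0 where d0: "\<delta>0 > 0" and H: "\<And>(p::'a) u v a. a > 0 \<Longrightarrow> norm (p - u) \<le> a \<Longrightarrow> norm (p - v) \<le> a \<Longrightarrow>
           norm (u - v) \<ge> (\<epsilon>/2) * a \<Longrightarrow> norm (p - (1/2) *\<^sub>R (u + v)) \<le> (1 - \<delta>0) * a"
    using UCscaled[OF ucs, of "\<epsilon>/2"] e by auto
  define \<delta> where "\<delta> = min \<delta>0 (1/2)"
  have dpos: "\<delta> > 0" "\<delta> \<le> 1/2" "\<delta> \<le> \<delta>0" using d0 by (auto simp: \<delta>_def)
  show ?thesis
  proof (intro exI[of _ \<delta>] conjI allI impI dpos(1,2))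
    fix u v :: 'a and d :: real
    assume d: "d > 0" and Fu: "limsup (\<lambda>n. ereal (norm (x n - u))) \<le> ereal d"
      and Fv: "limsup (\<lambda>n. ereal (norm (x n - v))) \<le> ereal d" and uv: "norm (u - v) \<ge> \<epsilon> * d"
    show "limsup (\<lambda>n. ereal (norm (x n - (1/2) *\<^sub>R (u + v)))) \<le> ereal ((1 - \<delta>) * d)"
    proof (rule L2)
      fix c assume c: "c > (1 - \<delta>) * d"
      define t where "t = min (d/2) ((c - (1 - \<delta>) * d)/2)"
      have t1: "t \<le> (c - (1 - \<delta>) * d)/2" "t \<le> d/2" unfolding t_def by (rule min.cobounded2, rule min.cobounded1)
      have "t > 0" using d c by (simp add: t_def)
      then have t: "t > 0" "t \<le> d/2" "t < c - (1 - \<delta>) * d" using t1 by argo+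
      define a where "a = d + t"
      have a: "a > d" "a \<le> 2 * d" using t by (auto simp: a_def)
      have ac: "(1 - \<delta>) * a < c"
      proof -
        have "(1 - \<delta>) * t \<le> t" using dpos t by (simp add: mult_le_cancel_right1)
        then show ?thesis using t by (simp add: a_def algebra_simps)
      qed
      have uv': "norm (u - v) \<ge> (\<epsilon>/2) * a"
      proof -
        have "(\<epsilon>/2) * a \<le> (\<epsilon>/2) * (2 * d)" using a e by (intro mult_left_mono) auto
        then show ?thesis using uv by simp
      qed
      have "eventually (\<lambda>n. norm (x n - u) < a) sequentially"
        by (rule L1) (use Fu a in \<open>auto intro: le_less_trans\<close>)
      moreover have "eventually (\<lambda>n. norm (x n - v) < a) sequentially"
        by (rule L1) (use Fv a in \<open>auto intro: le_less_trans\<close>)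
      ultimately show "eventually (\<lambda>n. norm (x n - (1/2) *\<^sub>R (u + v)) < c) sequentially"
      proof eventually_elim
        case (elim n)
        have "norm (x n - (1/2) *\<^sub>R (u + v)) \<le> (1 - \<delta>0) * a"
          using H[of a "x n" u v] elim uv' a d by auto
        also have "\<dots> \<le> (1 - \<delta>) * a" using dpos a d by (intro mult_right_mono) auto
        finally show ?case using ac by linarith
      qed
    qed
  qed
qed

lemma iterQ: "T ` Q \<subseteq> Q \<Longrightarrow> p \<in> Q \<Longrightarrow> (T ^^ n) p \<in> Q"
  by (induction n) auto

lemma archM: "(e::real) > 0 \<Longrightarrow> \<exists>M. 1 / (real M + 1) < e"
proof -
  assume e: "e > 0"
  obtain n where "inverse (real (Suc n)) < e" using reals_Archimedean[OF e] by blast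
  then show ?thesis by (intro exI[of _ n]) (simp add: inverse_eq_divide add.commute)
qed

theorem mainTheorem1:
  fixes Q :: "'a::banach set" and T :: "'a \<Rightarrow> 'a" and r :: real and \<beta> :: "nat \<Rightarrow> real"
  assumes ucs: "uniformly_convex_space TYPE('a)"
    and Q: "Q \<noteq> {}" "bounded Q" "closed Q" "convex Q"
    and r: "r > 0"
    and \<beta>pos: "\<And>n. \<beta> n > 0"
    and \<beta>lim: "\<beta> \<longlonglongrightarrow> 1"
    and TQ: "T ` Q \<subseteq> Q"
    and Tlip: "\<And>p q n. p \<in> Q \<Longrightarrow> q \<in> Q \<Longrightarrow> norm (p - q) < r \<Longrightarrow> n \<ge> 1 \<Longrightarrow>
                 norm ((T ^^ n) p - (T ^^ n) q) \<le> \<beta> n * norm (p - q)"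
    and q0: "\<exists>q0\<in>Q. asymptotic_radius (\<lambda>n. (T ^^ n) q0) Q < ereal r"
  shows "(\<exists>x\<in>Q. T x = x) \<and> closed {x\<in>Q. T x = x}"
proof -
  have contT: "continuous_on Q T"
    unfolding continuous_on_iff
  proof (intro ballI allI impI)
    fix p e assume p: "p \<in> Q" and e: "(e::real) > 0"
    show "\<exists>d>0. \<forall>q\<in>Q. dist q p < d \<longrightarrow> dist (T q) (T p) < e"
    proof (intro exI[of _ "min r (e / \<beta> 1)"] conjI ballI impI)
      show "min r (e / \<beta> 1) > 0" using r e \<beta>pos[of 1] by simp
      fix q assume q: "q \<in> Q" and dq: "dist q p < min r (e / \<beta> 1)"
      have "norm ((T ^^ 1) q - (T ^^ 1) p) \<le> \<beta> 1 * norm (q - p)"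
        using Tlip[OF q p _ order_refl] dq by (simp add: dist_norm)
      also have "\<dots> < \<beta> 1 * (e / \<beta> 1)" using dq \<beta>pos[of 1]
        by (intro mult_strict_left_mono) (auto simp: dist_norm)
      also have "\<dots> = e" using \<beta>pos[of 1] by simp
      finally show "dist (T q) (T p) < e" by (simp add: dist_norm)
    qed
  qed
  have closedFix: "closed {x\<in>Q. T x = x}"
  proof -
    have "closed {x\<in>Q. T x - x = 0}"
      by (intro continuous_closed_preimage_constant continuous_on_diff contT continuous_on_id Q(3))
    then show ?thesis by simp
  qed
  obtain q0 where q0Q: "q0 \<in> Q" and rad: "asymptotic_radius (\<lambda>n. (T ^^ n) q0) Q < ereal r"
    using q0 by blast
  define x where "x n = (T ^^ n) q0" for n
  have xQ: "x n \<in> Q" for n unfolding x_def using iterQ[OF TQ q0Q] .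
  define F where "F y = limsup (\<lambda>n. ereal (norm (x n - y)))" for y
  have F0: "F y \<ge> 0" for y
    unfolding F_def by (rule le_Limsup) auto
  define \<rho> where "\<rho> = (INF y\<in>Q. F y)"
  have \<rho>r: "\<rho> < ereal r" using rad unfolding \<rho>_def F_def asymptotic_radius_def x_def .
  have \<rho>0: "\<rho> \<ge> 0" unfolding \<rho>_def by (rule INF_greatest) (rule F0)
  obtain \<rho>' where \<rho>': "\<rho> = ereal \<rho>'" using \<rho>r \<rho>0 by (cases \<rho>) auto
  have \<rho>'r: "\<rho>' < r" "\<rho>' \<ge> 0" using \<rho>r \<rho>0 \<rho>' by auto
  have low: "ereal \<rho>' \<le> F y" if "y \<in> Q" for y
    using that unfolding \<rho>'[symmetric] \<rho>_def by (rule INF_lower)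
  have midQ: "(1/2) *\<^sub>R (u + v) \<in> Q" if "u \<in> Q" "v \<in> Q" for u v
  proof -
    have "(1/2) *\<^sub>R u + (1/2) *\<^sub>R v \<in> Q"
      by (rule convexD[OF Q(4) that]) auto
    then show ?thesis by (simp add: scaleR_add_right)
  qed
  have "\<forall>k. \<exists>y\<in>Q. F y < ereal (\<rho>' + 1 / (real k + 1))"
  proof
    fix k
    have "\<rho> < ereal (\<rho>' + 1 / (real k + 1))" using \<rho>' by simp
    then show "\<exists>y\<in>Q. F y < ereal (\<rho>' + 1 / (real k + 1))"
      unfolding \<rho>_def by (simp add: INF_less_iff)
  qed
  then obtain ys where ysQ: "\<And>k. ys k \<in> Q" and Fys: "\<And>k. F (ys k) \<le> ereal (\<rho>' + 1 / (real k + 1))"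
    by (metis less_imp_le)
  have Fysle: "F (ys k) \<le> ereal (\<rho>' + 1 / (real M + 1))" if "k \<ge> M" for k M
  proof -
    have "1 / (real k + 1) \<le> 1 / (real M + 1)" using that by (simp add: frac_le)
    then show ?thesis using Fys[of k] by (meson ereal_less_eq(3) order.trans add_left_mono)
  qed
  have arch: "\<exists>M. 1 / (real M + 1) < e" if "e > 0" for e :: real
    using archM that by blast
  have "Cauchy ys"
  proof (rule CauchyI)
    fix e :: real assume e: "e > 0"
    show "\<exists>M. \<forall>m\<ge>M. \<forall>n\<ge>M. norm (ys m - ys n) < e"
    proof (cases "\<rho>' = 0")
      case True
      obtain M where M: "1 / (real M + 1) < e / 2" using arch[of "e/2"] e by auto
      show ?thesis
      proof (intro exI[of _ M] allI impI)
        fix m n assume "m \<ge> M" "n \<ge> M"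
        then have "norm (ys m - ys n) \<le> (\<rho>' + 1 / (real M + 1)) + (\<rho>' + 1 / (real M + 1))"
          using Fysle[of M m] Fysle[of M n] by (intro Ltri[of x]) (auto simp: F_def)
        then show "norm (ys m - ys n) < e" using M True by simp
      qed
    next
      case False
      then have \<rho>pos: "\<rho>' > 0" using \<rho>'r by simp
      define \<epsilon> where "\<epsilon> = e / (\<rho>' + 1)"
      have \<epsilon>: "\<epsilon> > 0" using e \<rho>pos by (simp add: \<epsilon>_def)
      obtain \<delta> where \<delta>: "\<delta> > 0" "\<delta> \<le> 1/2" and Hm: "\<And>u v d. d > 0 \<Longrightarrow> F u \<le> ereal d \<Longrightarrow>
         F v \<le> ereal d \<Longrightarrow> norm (u - v) \<ge> \<epsilon> * d \<Longrightarrow> F ((1/2) *\<^sub>R (u + v)) \<le> ereal ((1 - \<delta>) * d)"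
        using Mid[OF ucs \<epsilon>, of x] unfolding F_def by blast
      have "min 1 (\<delta> * \<rho>') > 0" using \<delta> \<rho>pos by simp
      then obtain M where M: "1 / (real M + 1) < min 1 (\<delta> * \<rho>')" using arch by blast
      show ?thesis
      proof (intro exI[of _ M] allI impI)
        fix m n assume mn: "m \<ge> M" "n \<ge> M"
        define d where "d = \<rho>' + 1 / (real M + 1)"
        have Mpos: "0 < 1 / (real M + 1)" by simp
        have dpos: "d > 0" "d \<le> \<rho>' + 1" using \<rho>pos M Mpos unfolding d_def by linarith+
        have dlt: "(1 - \<delta>) * d < \<rho>'"
        proof -
          have gen: "\<And>t::real. (1 - \<delta>) * (\<rho>' + t) = \<rho>' + t - \<delta> * \<rho>' - \<delta> * t"
            by (simp add: algebra_simps)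
          have "(1 - \<delta>) * d = \<rho>' + 1 / (real M + 1) - \<delta> * \<rho>' - \<delta> * (1 / (real M + 1))"
            unfolding d_def by (rule gen)
          moreover have "\<delta> * (1 / (real M + 1)) \<ge> 0" using \<delta> by simp
          moreover have "1 / (real M + 1) < \<delta> * \<rho>'" using M by simp
          ultimately show ?thesis by linarith
        qed
        show "norm (ys m - ys n) < e"
        proof (rule ccontr)
          assume "\<not> norm (ys m - ys n) < e"
          then have ge: "norm (ys m - ys n) \<ge> e" by simp
          have "\<epsilon> * d \<le> \<epsilon> * (\<rho>' + 1)" using dpos \<epsilon> by (intro mult_left_mono) auto
          also have "\<dots> = e" using \<rho>pos by (simp add: \<epsilon>_def)
          finally have "norm (ys m - ys n) \<ge> \<epsilon> * d" using ge by simp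
          then have "F ((1/2) *\<^sub>R (ys m + ys n)) \<le> ereal ((1 - \<delta>) * d)"
            using Hm[OF dpos(1)] Fysle[OF mn(1)] Fysle[OF mn(2)] by (simp add: d_def)
          moreover have "ereal \<rho>' \<le> F ((1/2) *\<^sub>R (ys m + ys n))" using low midQ ysQ by blast
          ultimately show False using dlt by (meson ereal_less_eq(3) leD order.trans)
        qed
      qed
    qed
  qed
  then obtain z where ysz: "ys \<longlonglongrightarrow> z" using Cauchy_convergent_iff convergent_def by blast
  have zQ: "z \<in> Q" using closed_sequentially[OF Q(3) ysQ ysz] .
  have Fz: "F z \<le> ereal \<rho>'"
    unfolding F_def
  proof (rule L2)
    fix c assume c: "c > \<rho>'"
    obtain M where M: "1 / (real M + 1) < (c - \<rho>') / 2" using arch[of "(c - \<rho>')/2"] c by auto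
    have "eventually (\<lambda>k. norm (ys k - z) < (c - \<rho>') / 2) sequentially"
    proof -
      have "(c - \<rho>') / 2 > 0" using c by simp
      then show ?thesis using ysz unfolding tendsto_iff dist_norm by blast
    qed
    then obtain N where N: "\<forall>k\<ge>N. norm (ys k - z) < (c - \<rho>') / 2"
      unfolding eventually_sequentially by blast
    define k where "k = max N M"
    have k: "k \<ge> M" "norm (ys k - z) < (c - \<rho>') / 2" using N by (auto simp: k_def)
    have "F z \<le> ereal ((\<rho>' + 1 / (real M + 1)) + norm (z - ys k))"
      using Llip[of x "ys k" "\<rho>' + 1 / (real M + 1)" z] Fysle[OF k(1)] by (simp add: F_def)
    moreover have "(\<rho>' + 1 / (real M + 1)) + norm (z - ys k) < c"
      using M k by (simp add: norm_minus_commute)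
    ultimately have "F z < ereal c" by (meson ereal_less_eq(3) le_less_trans ereal_less(2) less_ereal.simps(1))
    then show "eventually (\<lambda>n. norm (x n - z) < c) sequentially"
      by (intro L1) (simp add: F_def)
  qed
  define w where "w m = (T ^^ m) z" for m
  have wQ: "w m \<in> Q" for m unfolding w_def using iterQ[OF TQ zQ] .
  have Fw: "F (w m) \<le> ereal (\<beta> m * \<rho>')" if m: "m \<ge> 1" for m
    unfolding F_def
  proof (rule L2)
    fix a assume a: "a > \<beta> m * \<rho>'"
    have "a / \<beta> m > \<rho>'" using a \<beta>pos[of m] by (simp add: field_simps)
    then have "F z < ereal (min r (a / \<beta> m))" using Fz \<rho>'r by (auto intro: le_less_trans)
    then have ev: "eventually (\<lambda>n. norm (x n - z) < min r (a / \<beta> m)) sequentially"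
      by (intro L1) (simp add: F_def)
    have "eventually (\<lambda>n. norm (x (n + m) - w m) < a) sequentially"
      using ev
    proof eventually_elim
      case (elim n)
      have xe: "x (n + m) = (T ^^ m) (x n)"
        by (simp add: x_def funpow_add add.commute)
      have "norm (x (n + m) - w m) \<le> \<beta> m * norm (x n - z)"
        unfolding xe w_def using Tlip[OF xQ zQ _ m] elim by simp
      also have "\<dots> < \<beta> m * (a / \<beta> m)" using elim \<beta>pos[of m]
        by (intro mult_strict_left_mono) auto
      also have "\<dots> = a" using \<beta>pos[of m] by simp
      finally show ?case .
    qed
    then show "eventually (\<lambda>n. norm (x n - w m) < a) sequentially"
      by (simp add: eventually_sequentially_seg[of "\<lambda>n. norm (x n - w m) < a" m])
  qed
  have wlim: "w \<longlonglongrightarrow> z"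
  proof (cases "\<rho>' = 0")
    case True
    have "w m = z" if "m \<ge> 1" for m
    proof -
      have "norm (w m - z) \<le> 0 + 0"
        using Fw[OF that] Fz True by (intro Ltri[of x]) (auto simp: F_def)
      then show ?thesis by simp
    qed
    then show ?thesis
      by (intro LIMSEQ_I) (metis diff_self norm_zero)
  next
    case False
    then have \<rho>pos: "\<rho>' > 0" using \<rho>'r by simp
    show ?thesis
    proof (rule LIMSEQ_I)
      fix e :: real assume e: "e > 0"
      define \<epsilon> where "\<epsilon> = e / (2 * \<rho>')"
      have \<epsilon>: "\<epsilon> > 0" using e \<rho>pos by (simp add: \<epsilon>_def)
      obtain \<delta> where \<delta>: "\<delta> > 0" "\<delta> \<le> 1/2" and Hm: "\<And>u v d. d > 0 \<Longrightarrow> F u \<le> ereal d \<Longrightarrow>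
         F v \<le> ereal d \<Longrightarrow> norm (u - v) \<ge> \<epsilon> * d \<Longrightarrow> F ((1/2) *\<^sub>R (u + v)) \<le> ereal ((1 - \<delta>) * d)"
        using Mid[OF ucs \<epsilon>, of x] unfolding F_def by blast
      have "eventually (\<lambda>m. \<beta> m < 1 + \<delta>) sequentially"
        using order_tendstoD(2)[OF \<beta>lim] \<delta> by simp
      then obtain M where M: "\<And>m. m \<ge> M \<Longrightarrow> \<beta> m < 1 + \<delta>"
        unfolding eventually_sequentially by blast
      show "\<exists>no. \<forall>m\<ge>no. norm (w m - z) < e"
      proof (intro exI[of _ "max M 1"] allI impI)
        fix m assume m: "m \<ge> max M 1"
        define d where "d = max 1 (\<beta> m) * \<rho>'"
        have bm: "\<beta> m < 1 + \<delta>" using M m by simp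
        have dpos: "d > 0" "d < (1 + \<delta>) * \<rho>'" "\<rho>' \<le> d" "\<beta> m * \<rho>' \<le> d"
          using \<rho>pos bm \<delta> by (auto simp: d_def intro: mult_strict_right_mono mult_right_mono)
        have dlt: "(1 - \<delta>) * d < \<rho>'"
        proof -
          have "(1 - \<delta>) * d \<le> (1 - \<delta>) * ((1 + \<delta>) * \<rho>')"
            using dpos \<delta> by (intro mult_left_mono) auto
          also have "\<dots> = \<rho>' - \<delta> * \<delta> * \<rho>'" by (simp add: algebra_simps)
          also have "\<dots> < \<rho>'" using \<delta> \<rho>pos by simp
          finally show ?thesis .
        qed
        show "norm (w m - z) < e"
        proof (rule ccontr)
          assume "\<not> norm (w m - z) < e"
          then have ge: "norm (w m - z) \<ge> e" by simp
          have "(1 + \<delta>) * \<rho>' \<le> 2 * \<rho>'" using \<delta> \<rho>pos by (intro mult_right_mono) auto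
          then have "d \<le> 2 * \<rho>'" using dpos by linarith
          then have "\<epsilon> * d \<le> \<epsilon> * (2 * \<rho>')" using \<epsilon> by (intro mult_left_mono) auto
          also have "\<dots> = e" using \<rho>pos by (simp add: \<epsilon>_def)
          finally have "norm (w m - z) \<ge> \<epsilon> * d" using ge by simp
          moreover have "F (w m) \<le> ereal d" using Fw[of m] m dpos(4) by (meson ereal_less_eq(3) order.trans max.bounded_iff)
          moreover have "F z \<le> ereal d" using Fz dpos(3) by (meson ereal_less_eq(3) order.trans)
          ultimately have "F ((1/2) *\<^sub>R (w m + z)) \<le> ereal ((1 - \<delta>) * d)"
            using Hm[OF dpos(1)] by simp
          moreover have "ereal \<rho>' \<le> F ((1/2) *\<^sub>R (w m + z))" using low midQ wQ zQ by blast
          ultimately show False using dlt by (meson ereal_less_eq(3) leD order.trans)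
        qed
      qed
    qed
  qed
  have "(\<lambda>m. T (w m)) \<longlonglongrightarrow> T z"
    using continuous_on_tendsto_compose[OF contT wlim zQ] wQ by simp
  moreover have "(\<lambda>m. T (w m)) = (\<lambda>m. w (Suc m))" by (simp add: w_def)
  moreover have "(\<lambda>m. w (Suc m)) \<longlonglongrightarrow> z" using wlim by (rule LIMSEQ_Suc)
  ultimately have "T z = z" using LIMSEQ_unique by metis
  then show ?thesis using zQ closedFix by blast
qed

end
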